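(* Let $\beta>0$, $\gamma>0$, $\mu:=\beta\gamma^2$, and let $n'=n'(n)$, $n''=n''(n)$ be positive integers with $n'\le\lfloor\beta n\rfloor$, $n'/n=\beta+o(1)$, $n''\le n$, $n''/n=1+o(1)$. Let $\delta>0$. Then there exist a constant $C=C(\beta,\gamma,\delta)>0$ and $N_0$ such that for all $n\ge N_0$ and all integers $k\ge1$, if $\tilde X=\tilde X_1+\cdots+\tilde X_k$ where $\tilde X_1,\dots,\tilde X_k$ are i.i.d. with the law of $D(n',n'',\gamma/n)$, then $$\mathbb{P}(\tilde X\ge(1+\delta)\mu k)\le e^{-Ck}\quad\text{and}\quad \mathbb{P}(\tilde X\le(1-\delta)\mu k)\le e^{-Ck}.$$
   Context: For integers $m\ge0$, $N\ge1$ and $p\in[0,1]$, let $\mathcal{G}^{(N)}_{m,p}$ be the random intersection graph with $N$ vertices and $m$ auxiliary vertices: each of the $Nm$ vertex–auxiliary-vertex pairs is joined independently with probability $p$, and two distinct vertices are adjacent iff they share an auxiliary neighbour. $D(m,N,p)$ denotes a random variable distributed as the degree of a uniformly chosen vertex of $\mathcal{G}^{(N)}_{m,p}$; its generating function is $\mathbb{E}[z^{D(m,N,p)}]=\sum_{j=0}^{N-1}\binom{N-1}{j}z^j(1-z)^{N-1-j}[1-p+p(1-p)^{N-1-j}]^m$. *)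

theory Defs
  imports "HOL-Probability.Probability"
begin

text \<open>Random intersection graph with vertices 0..N-1 and auxiliary vertices 0..m-1.
  A sample is an indicator function on pairs (vertex, auxiliary vertex), each pair
  present independently with probability p.\<close>

definition rig_edges :: "nat \<Rightarrow> nat \<Rightarrow> real \<Rightarrow> (nat \<times> nat \<Rightarrow> bool) pmf" where
  "rig_edges m N p = Pi_pmf ({..<N} \<times> {..<m}) False (\<lambda>_. bernoulli_pmf p)"

definition rig_adj :: "nat \<Rightarrow> (nat \<times> nat \<Rightarrow> bool) \<Rightarrow> nat \<Rightarrow> nat \<Rightarrow> bool" where
  "rig_adj m G u v \<longleftrightarrow> u \<noteq> v \<and> (\<exists>a<m. G (u, a) \<and> G (v, a))"

definition rig_degree :: "nat \<Rightarrow> nat \<Rightarrow> (nat \<times> nat \<Rightarrow> bool) \<Rightarrow> nat \<Rightarrow> nat" where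
  "rig_degree m N G v = card {w \<in> {..<N}. rig_adj m G v w}"

text \<open>D(m,N,p): degree of a uniformly chosen vertex of G^(N)_{m,p} (N \<ge> 1).\<close>
definition D_pmf :: "nat \<Rightarrow> nat \<Rightarrow> real \<Rightarrow> nat pmf" where
  "D_pmf m N p =
     bind_pmf (rig_edges m N p) (\<lambda>G.
       map_pmf (\<lambda>v. rig_degree m N G v) (pmf_of_set {..<N}))"

definition iid_sum_pmf :: "nat \<Rightarrow> nat pmf \<Rightarrow> nat pmf" where
  "iid_sum_pmf k P = map_pmf (\<lambda>f. \<Sum>i<k. f i) (Pi_pmf {..<k} 0 (\<lambda>_. P))"


end

theory Submission
  imports Defs
begin

lemma fin_Pi_bern:
  assumes "finite A"
  shows "finite (set_pmf (Pi_pmf A False (\<lambda>_. bernoulli_pmf p)))"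
  by (rule finite_subset[OF set_Pi_pmf_subset'[OF assms]]) (auto intro!: finite_PiE_dflt assms)

lemma exp_pair:
  fixes f :: "'a \<times> 'b \<Rightarrow> real"
  assumes "finite (set_pmf A)" "finite (set_pmf B)"
  shows "measure_pmf.expectation (pair_pmf A B) f =
         measure_pmf.expectation A (\<lambda>a. measure_pmf.expectation B (\<lambda>b. f (a, b)))"
proof -
  have "measure_pmf.expectation (pair_pmf A B) f =
        (\<Sum>a\<in>set_pmf A. pmf A a *\<^sub>R measure_pmf.expectation (map_pmf (Pair a) B) f)"
    unfolding pair_pmf_def
    by (subst pmf_expectation_bind[of "set_pmf A"]) (auto simp: assms map_pmf_def[symmetric])
  also have "\<dots> = measure_pmf.expectation A (\<lambda>a. measure_pmf.expectation B (\<lambda>b. f (a, b)))"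
    by (subst integral_measure_pmf[of "set_pmf A"]) (auto simp: assms)
  finally show ?thesis .
qed

lemma exp_Pi_prod_bern:
  fixes h :: "'a \<Rightarrow> bool \<Rightarrow> real"
  assumes "finite A" "0 \<le> p" "p \<le> 1" "\<And>x b. h x b \<ge> 0"
  shows "measure_pmf.expectation (Pi_pmf A False (\<lambda>_. bernoulli_pmf p)) (\<lambda>G. \<Prod>x\<in>A. h x (G x))
         = (\<Prod>x\<in>A. h x True * p + h x False * (1 - p))"
  by (subst expectation_prod_Pi_pmf) (auto simp: assms integrable_measure_pmf_finite)

lemma prob_le_exp:
  fixes g :: "'a \<Rightarrow> real"
  assumes "finite (set_pmf M)" "\<And>x. g x \<ge> 0" "\<And>x. x \<in> S \<Longrightarrow> g x \<ge> 1"
  shows "measure_pmf.prob M S \<le> measure_pmf.expectation M g"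
proof -
  have "measure_pmf.prob M S = measure_pmf.expectation M (indicator S)"
    by simp
  also have "\<dots> \<le> measure_pmf.expectation M g"
    by (intro integral_mono) (auto simp: integrable_measure_pmf_finite assms indicator_def)
  finally show ?thesis .
qed

lemma fin_iid: "finite (set_pmf P) \<Longrightarrow> finite (set_pmf (iid_sum_pmf k P))"
  unfolding iid_sum_pmf_def
  by (auto intro!: finite_subset[OF set_Pi_pmf_subset'] finite_PiE_dflt)

lemma iid_mgf:
  assumes "finite (set_pmf P)"
  shows "measure_pmf.expectation (iid_sum_pmf k P) (\<lambda>x. exp (t * real x)) =
         (measure_pmf.expectation P (\<lambda>x. exp (t * real x))) ^ k"
proof -
  have "measure_pmf.expectation (iid_sum_pmf k P) (\<lambda>x. exp (t * real x)) =
     measure_pmf.expectation (Pi_pmf {..<k} 0 (\<lambda>_. P)) (\<lambda>f. \<Prod>i\<in>{..<k}. exp (t * real (f i)))"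
    unfolding iid_sum_pmf_def by (simp add: exp_sum sum_distrib_left)
  also have "\<dots> = (measure_pmf.expectation P (\<lambda>x. exp (t * real x))) ^ k"
    by (subst expectation_prod_Pi_pmf) (auto simp: assms integrable_measure_pmf_finite)
  finally show ?thesis .
qed

lemma chernoff_upper:
  assumes "finite (set_pmf P)" "t \<ge> 0"
    and "measure_pmf.expectation P (\<lambda>x. exp (t * real x)) * exp (- t * a) \<le> exp (- C)"
  shows "measure_pmf.prob (iid_sum_pmf k P) {x. real x \<ge> a * real k} \<le> exp (- C * real k)"
proof -
  let ?M = "measure_pmf.expectation P (\<lambda>x. exp (t * real x))"
  have M0: "?M \<ge> 0" by (intro integral_nonneg_AE) auto
  have "measure_pmf.prob (iid_sum_pmf k P) {x. real x \<ge> a * real k}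
     \<le> measure_pmf.expectation (iid_sum_pmf k P) (\<lambda>x. exp (t * real x) * exp (- t * a * real k))"
  proof (rule prob_le_exp[OF fin_iid[OF assms(1)]])
    fix x assume "x \<in> {x. real x \<ge> a * real k}"
    hence "t * (a * real k) \<le> t * real x" using assms(2) by (intro mult_left_mono) auto
    hence "t * real x + (- t * a * real k) \<ge> 0" by (simp add: algebra_simps)
    thus "exp (t * real x) * exp (- t * a * real k) \<ge> 1"
      by (simp add: exp_add[symmetric])
  qed auto
  also have "\<dots> = ?M ^ k * exp (- t * a) ^ k"
    by (simp add: iid_mgf[OF assms(1)] exp_of_nat_mult[symmetric] mult.commute mult.left_commute)
  also have "\<dots> = (?M * exp (- t * a)) ^ k" by (simp add: power_mult_distrib)
  also have "\<dots> \<le> exp (- C) ^ k"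
    by (intro power_mono assms(3)) (use M0 in auto)
  also have "\<dots> = exp (- C * real k)" by (simp add: exp_of_nat_mult[symmetric] mult.commute)
  finally show ?thesis .
qed

lemma chernoff_lower:
  assumes "finite (set_pmf P)" "t \<ge> 0"
    and "measure_pmf.expectation P (\<lambda>x. exp (- t * real x)) * exp (t * b) \<le> exp (- C)"
  shows "measure_pmf.prob (iid_sum_pmf k P) {x. real x \<le> b * real k} \<le> exp (- C * real k)"
proof -
  let ?M = "measure_pmf.expectation P (\<lambda>x. exp (- t * real x))"
  have M0: "?M \<ge> 0" by (intro integral_nonneg_AE) auto
  have "measure_pmf.prob (iid_sum_pmf k P) {x. real x \<le> b * real k}
     \<le> measure_pmf.expectation (iid_sum_pmf k P) (\<lambda>x. exp (- t * real x) * exp (t * b * real k))"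
  proof (rule prob_le_exp[OF fin_iid[OF assms(1)]])
    fix x assume "x \<in> {x. real x \<le> b * real k}"
    hence "t * real x \<le> t * (b * real k)" using assms(2) by (intro mult_left_mono) auto
    hence "- t * real x + (t * b * real k) \<ge> 0" by (simp add: algebra_simps)
    thus "exp (- t * real x) * exp (t * b * real k) \<ge> 1"
      by (simp add: exp_add[symmetric])
  qed auto
  also have "\<dots> = ?M ^ k * exp (t * b) ^ k"
    using iid_mgf[OF assms(1), of k "-t"] by (simp add: exp_of_nat_mult[symmetric] mult.commute mult.left_commute)
  also have "\<dots> = (?M * exp (t * b)) ^ k" by (simp add: power_mult_distrib)
  also have "\<dots> \<le> exp (- C) ^ k"
    by (intro power_mono assms(3)) (use M0 in auto)
  also have "\<dots> = exp (- C * real k)" by (simp add: exp_of_nat_mult[symmetric] mult.commute)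
  finally show ?thesis .
qed

lemma fin_rig: "finite (set_pmf (rig_edges m N p))"
  unfolding rig_edges_def by (rule fin_Pi_bern) auto

lemma rig_degree_le: "rig_degree m N G v \<le> N"
  unfolding rig_degree_def by (rule order.trans[OF card_mono[of "{..<N}"]]) auto

lemma fin_D: "finite (set_pmf (D_pmf m N p))"
  unfolding D_pmf_def by (rule finite_subset[of _ "{..N}"]) (auto simp: rig_degree_le)

lemma D_bound:
  fixes h :: "nat \<Rightarrow> real"
  assumes "N > 0" "\<And>v. v < N \<Longrightarrow> measure_pmf.expectation (rig_edges m N p) (\<lambda>G. h (rig_degree m N G v)) \<le> B"
  shows "measure_pmf.expectation (D_pmf m N p) h \<le> B"
proof -
  have "measure_pmf.expectation (D_pmf m N p) h =
    (\<Sum>G\<in>set_pmf (rig_edges m N p). pmf (rig_edges m N p) G *\<^sub>R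
        measure_pmf.expectation (map_pmf (\<lambda>v. rig_degree m N G v) (pmf_of_set {..<N})) h)"
    unfolding D_pmf_def using assms(1)
    by (subst pmf_expectation_bind[of "set_pmf (rig_edges m N p)"]) (auto simp: fin_rig lessThan_empty_iff)
  also have "\<dots> = measure_pmf.expectation (rig_edges m N p)
       (\<lambda>G. (\<Sum>v<N. h (rig_degree m N G v)) / real N)"
    using assms(1) by (subst integral_measure_pmf[of "set_pmf (rig_edges m N p)"])
       (auto simp: fin_rig integral_pmf_of_set lessThan_empty_iff)
  also have "\<dots> = (\<Sum>v<N. measure_pmf.expectation (rig_edges m N p) (\<lambda>G. h (rig_degree m N G v))) / real N"
    by (simp add: integrable_measure_pmf_finite fin_rig)
  also have "\<dots> \<le> (\<Sum>v<N. B) / real N"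
    by (intro divide_right_mono sum_mono assms(2)) auto
  also have "\<dots> = B" using assms(1) by simp
  finally show ?thesis .
qed

definition comb :: "(nat \<times> nat) set \<Rightarrow> (nat \<times> nat \<Rightarrow> bool) \<times> (nat \<times> nat \<Rightarrow> bool) \<Rightarrow> nat \<times> nat \<Rightarrow> bool"
  where "comb A fg = (\<lambda>x. if x \<in> A then fst fg x else snd fg x)"

lemma rig_split:
  assumes "v < N"
  shows "rig_edges m N p = map_pmf (comb ({v}\<times>{..<m}))
     (pair_pmf (Pi_pmf ({v}\<times>{..<m}) False (\<lambda>_. bernoulli_pmf p))
               (Pi_pmf (({..<N}-{v})\<times>{..<m}) False (\<lambda>_. bernoulli_pmf p)))"
proof -
  have e: "{..<N} \<times> {..<m} = ({v}\<times>{..<m}) \<union> (({..<N}-{v})\<times>{..<m})" using assms by auto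
  have c: "comb ({v}\<times>{..<m}) = (\<lambda>(f,g) x. if x \<in> {v}\<times>{..<m} then f x else g x)"
    by (auto simp: comb_def fun_eq_iff)
  show ?thesis unfolding rig_edges_def e c
    by (rule Pi_pmf_union) auto
qed

lemma rig_exp_split:
  fixes F :: "(nat \<times> nat \<Rightarrow> bool) \<Rightarrow> real"
  assumes "v < N"
  shows "measure_pmf.expectation (rig_edges m N p) F =
    measure_pmf.expectation (Pi_pmf ({v}\<times>{..<m}) False (\<lambda>_. bernoulli_pmf p)) (\<lambda>f.
    measure_pmf.expectation (Pi_pmf (({..<N}-{v})\<times>{..<m}) False (\<lambda>_. bernoulli_pmf p)) (\<lambda>g.
      F (comb ({v}\<times>{..<m}) (f, g))))"
  by (subst rig_split[OF assms]) (simp add: exp_pair fin_Pi_bern)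

lemma sum_snd_prod:
  fixes c :: "nat \<Rightarrow> real"
  assumes "finite W" "finite M"
  shows "(\<Sum>x\<in>W\<times>M. c (snd x)) = real (card W) * (\<Sum>a\<in>M. c a)"
proof -
  have "(\<Sum>x\<in>W\<times>M. c (snd x)) = (\<Sum>w\<in>W. \<Sum>a\<in>M. c a)"
    by (subst sum.cartesian_product) (simp add: case_prod_unfold)
  thus ?thesis by simp
qed

lemma sum_single_prod:
  fixes g :: "nat \<times> nat \<Rightarrow> real"
  shows "(\<Sum>x\<in>{v}\<times>M. g x) = (\<Sum>a\<in>M. g (v, a))"
proof -
  have "{v}\<times>M = Pair v ` M" by auto
  thus ?thesis by (simp add: sum.reindex inj_on_def)
qed

lemma deg_le_Y:
  assumes "v < N"
  shows "real (rig_degree m N G v) \<le> (\<Sum>x\<in>({..<N}-{v})\<times>{..<m}. of_bool (G (v, snd x) \<and> G x))"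
proof -
  let ?T = "\<lambda>a. {w\<in>{..<N}-{v}. G (v, a) \<and> G (w, a)}"
  have "{w\<in>{..<N}. rig_adj m G v w} \<subseteq> (\<Union>a\<in>{..<m}. ?T a)"
    by (auto simp: rig_adj_def)
  hence "rig_degree m N G v \<le> card (\<Union>a\<in>{..<m}. ?T a)"
    unfolding rig_degree_def by (intro card_mono) auto
  also have "\<dots> \<le> (\<Sum>a<m. card (?T a))" by (rule card_UN_le) auto
  finally have "real (rig_degree m N G v) \<le> (\<Sum>a<m. real (card (?T a)))"
    by (simp add: of_nat_sum[symmetric] del: of_nat_sum)
  also have "\<dots> = (\<Sum>a<m. \<Sum>w\<in>{..<N}-{v}. of_bool (G (v, a) \<and> G (w, a)))"
    by (intro sum.cong refl) (simp add: Int_def)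
  also have "\<dots> = (\<Sum>w\<in>{..<N}-{v}. \<Sum>a<m. of_bool (G (v, a) \<and> G (w, a)))"
    by (rule sum.swap)
  also have "\<dots> = (\<Sum>x\<in>({..<N}-{v})\<times>{..<m}. of_bool (G (v, snd x) \<and> G x))"
    by (subst sum.cartesian_product) (simp add: case_prod_unfold del: sum_of_bool_eq)
  finally show ?thesis .
qed

lemma U_bound:
  assumes "v < N" "0 \<le> p" "p \<le> 1" "t \<ge> 0"
  shows "measure_pmf.expectation (rig_edges m N p) (\<lambda>G. exp (t * real (rig_degree m N G v)))
     \<le> (1 - p + p * exp (real (N - 1) * p * (exp t - 1))) ^ m"
proof -
  define A where "A = {v}\<times>{..<m}"
  define B where "B = ({..<N}-{v})\<times>{..<m}"
  let ?PA = "Pi_pmf A False (\<lambda>_. bernoulli_pmf p)"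
  let ?PB = "Pi_pmf B False (\<lambda>_. bernoulli_pmf p)"
  have finA: "finite A" and finB: "finite B" by (auto simp: A_def B_def)
  have cardB: "card ({..<N}-{v}) = N - 1" using assms(1) by simp
  have "measure_pmf.expectation (rig_edges m N p) (\<lambda>G. exp (t * real (rig_degree m N G v)))
     \<le> measure_pmf.expectation (rig_edges m N p) (\<lambda>G. \<Prod>x\<in>B. exp (t * of_bool (G (v, snd x) \<and> G x)))"
  proof (intro integral_mono)
    fix G
    have "t * real (rig_degree m N G v) \<le> t * (\<Sum>x\<in>B. of_bool (G (v, snd x) \<and> G x))"
      unfolding B_def using deg_le_Y[OF assms(1)] assms(4) by (intro mult_left_mono) auto
    thus "exp (t * real (rig_degree m N G v)) \<le> (\<Prod>x\<in>B. exp (t * of_bool (G (v, snd x) \<and> G x)))"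
      by (simp add: exp_sum[OF finB, symmetric] sum_distrib_left del: sum_of_bool_eq)
  qed (auto simp: integrable_measure_pmf_finite fin_rig)
  also have "\<dots> = measure_pmf.expectation ?PA (\<lambda>f. measure_pmf.expectation ?PB (\<lambda>g.
      \<Prod>x\<in>B. exp (t * of_bool (f (v, snd x) \<and> g x))))"
  proof -
    have "\<And>f g. (\<Prod>x\<in>B. exp (t * of_bool (comb A (f, g) (v, snd x) \<and> comb A (f, g) x))) =
                (\<Prod>x\<in>B. exp (t * of_bool (f (v, snd x) \<and> g x)))"
      by (intro prod.cong refl) (auto simp: comb_def A_def B_def)
    thus ?thesis
      unfolding A_def B_def by (subst rig_exp_split[OF assms(1)]) (simp add: A_def B_def)
  qed
  also have "\<dots> = measure_pmf.expectation ?PA (\<lambda>f. \<Prod>x\<in>B. exp (t * of_bool (f (v, snd x))) * p + (1 - p))"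
    by (intro Bochner_Integration.integral_cong refl, subst exp_Pi_prod_bern) (auto simp: finB assms)
  also have "\<dots> \<le> measure_pmf.expectation ?PA (\<lambda>f. \<Prod>x\<in>B. exp (p * (exp (t * of_bool (f (v, snd x))) - 1)))"
  proof (intro integral_mono prod_mono conjI)
    fix f x
    have "exp (t * of_bool (f (v, snd x))) \<ge> 1" using assms(4) by simp
    thus "0 \<le> exp (t * of_bool (f (v, snd x))) * p + (1 - p)" using assms(2,3)
      by (intro add_nonneg_nonneg mult_nonneg_nonneg) auto
    show "exp (t * of_bool (f (v, snd x))) * p + (1 - p) \<le> exp (p * (exp (t * of_bool (f (v, snd x))) - 1))"
      using exp_ge_add_one_self[of "p * (exp (t * of_bool (f (v, snd x))) - 1)"] by (simp add: algebra_simps)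
  qed (auto simp: integrable_measure_pmf_finite fin_Pi_bern finA)
  also have "\<dots> = measure_pmf.expectation ?PA (\<lambda>f. \<Prod>x\<in>A. exp (real (N - 1) * p * (exp (t * of_bool (f x)) - 1)))"
  proof (intro Bochner_Integration.integral_cong refl)
    fix f
    have "(\<Prod>x\<in>B. exp (p * (exp (t * of_bool (f (v, snd x))) - 1))) =
          exp (\<Sum>x\<in>B. p * (exp (t * of_bool (f (v, snd x))) - 1))"
      by (simp add: exp_sum[OF finB])
    also have "(\<Sum>x\<in>B. p * (exp (t * of_bool (f (v, snd x))) - 1)) =
          real (N - 1) * (\<Sum>a<m. p * (exp (t * of_bool (f (v, a))) - 1))"
      unfolding B_def by (subst sum_snd_prod[where c = "\<lambda>a. p * (exp (t * of_bool (f (v, a))) - 1)"]) (auto simp: cardB)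
    also have "\<dots> = (\<Sum>x\<in>A. real (N - 1) * p * (exp (t * of_bool (f x)) - 1))"
      unfolding A_def by (subst sum_single_prod) (simp add: sum_distrib_left mult.assoc)
    also have "exp \<dots> = (\<Prod>x\<in>A. exp (real (N - 1) * p * (exp (t * of_bool (f x)) - 1)))"
      by (simp add: exp_sum[OF finA])
    finally show "(\<Prod>x\<in>B. exp (p * (exp (t * of_bool (f (v, snd x))) - 1))) = \<dots>" .
  qed
  also have "\<dots> = (\<Prod>x\<in>A. exp (real (N - 1) * p * (exp t - 1)) * p + 1 * (1 - p))"
    by (subst exp_Pi_prod_bern[where h = "\<lambda>x b. exp (real (N - 1) * p * (exp (t * of_bool b) - 1))"])
       (auto simp: finA assms)
  also have "\<dots> = (1 - p + p * exp (real (N - 1) * p * (exp t - 1))) ^ m"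
    by (simp add: A_def card_cartesian_product algebra_simps)
  finally show ?thesis .
qed

lemma exp_neg_quad: fixes y :: real assumes "y \<ge> 0" shows "exp (- y) \<le> 1 - y + y\<^sup>2 / 2"
proof -
  have "(\<lambda>z. 1 - z + z\<^sup>2 / 2 - exp (- z)) 0 \<le> (\<lambda>z. 1 - z + z\<^sup>2 / 2 - exp (- z)) y"
  proof (rule DERIV_nonneg_imp_nondecreasing[OF assms])
    fix x :: real assume "0 \<le> x" "x \<le> y"
    have "1 + (- x) \<le> exp (- x)" by (rule exp_ge_add_one_self)
    moreover have "DERIV (\<lambda>z. 1 - z + z\<^sup>2 / 2 - exp (- z)) x :> (- 1 + x + exp (- x))"
      by (auto intro!: derivative_eq_intros simp: power2_eq_square)
    ultimately show "\<exists>d. DERIV (\<lambda>z. 1 - z + z\<^sup>2 / 2 - exp (- z)) x :> d \<and> d \<ge> 0" by force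
  qed
  thus ?thesis by simp
qed

lemma sq_le_exp: fixes y :: real assumes "y \<ge> 0" shows "y\<^sup>2 \<le> 2 * exp y"
  using exp_lower_Taylor_quadratic[OF assms] assms by simp

lemma prod_restrict_fst:
  fixes c :: real
  assumes "finite W" "finite M" "w \<in> W"
  shows "(\<Prod>x\<in>W\<times>M. if fst x = w \<and> Q (snd x) then c else 1) = (\<Prod>a\<in>M. if Q a then c else 1)"
proof -
  have "(\<Prod>x\<in>W\<times>M. if fst x = w \<and> Q (snd x) then c else 1) =
        (\<Prod>w'\<in>W. \<Prod>a\<in>M. if w' = w \<and> Q a then c else 1)"
    by (subst prod.cartesian_product) (simp add: case_prod_unfold)
  also have "\<dots> = (\<Prod>w'\<in>W. if w' = w then (\<Prod>a\<in>M. if Q a then c else 1) else 1)"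
    by (intro prod.cong refl) auto
  also have "\<dots> = (\<Prod>a\<in>M. if Q a then c else 1)" using assms by simp
  finally show ?thesis .
qed

lemma prod_single_prod:
  fixes g :: "nat \<times> nat \<Rightarrow> real"
  shows "(\<Prod>x\<in>{v}\<times>M. g x) = (\<Prod>a\<in>M. g (v, a))"
proof -
  have "{v}\<times>M = Pair v ` M" by auto
  thus ?thesis by (simp add: prod.reindex inj_on_def)
qed

lemma of_bool_all_prod: "(of_bool (\<forall>a<(m::nat). \<not> Q a) :: real) = (\<Prod>a<m. if Q a then 0 else 1)"
  by (induction m) (auto simp: less_Suc_eq)

lemma mean_none:
  assumes "v < N" "w < N" "w \<noteq> v" "0 \<le> p" "p \<le> 1"
  shows "measure_pmf.expectation (rig_edges m N p) (\<lambda>G. of_bool (\<forall>a<m. \<not> (G (v, a) \<and> G (w, a))))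
     = (1 - p\<^sup>2) ^ m"
proof -
  define A where "A = {v}\<times>{..<m}"
  define B where "B = ({..<N}-{v})\<times>{..<m}"
  let ?PA = "Pi_pmf A False (\<lambda>_. bernoulli_pmf p)"
  let ?PB = "Pi_pmf B False (\<lambda>_. bernoulli_pmf p)"
  have finA: "finite A" and finB: "finite B" by (auto simp: A_def B_def)
  have wW: "w \<in> {..<N}-{v}" using assms by auto
  have "measure_pmf.expectation (rig_edges m N p) (\<lambda>G. of_bool (\<forall>a<m. \<not> (G (v, a) \<and> G (w, a))) :: real)
    = measure_pmf.expectation ?PA (\<lambda>f. measure_pmf.expectation ?PB (\<lambda>g.
        \<Prod>x\<in>B. if fst x = w \<and> f (v, snd x) \<and> g x then 0 else 1))"
  proof -
    have "\<And>f g. (of_bool (\<forall>a<m. \<not> (comb A (f, g) (v, a) \<and> comb A (f, g) (w, a))) :: real) =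
              (\<Prod>x\<in>B. if fst x = w \<and> f (v, snd x) \<and> g x then 0 else 1)"
    proof -
      fix f g
      have "(of_bool (\<forall>a<m. \<not> (comb A (f, g) (v, a) \<and> comb A (f, g) (w, a))) :: real)
         = (\<Prod>a<m. if f (v, a) \<and> g (w, a) then 0 else 1)"
        unfolding of_bool_all_prod using assms(3)
        by (intro prod.cong refl) (auto simp: comb_def A_def)
      also have "\<dots> = (\<Prod>x\<in>B. if fst x = w \<and> (f (v, snd x) \<and> g (w, snd x)) then 0 else 1)"
        unfolding B_def by (rule prod_restrict_fst[OF _ _ wW, symmetric]) auto
      also have "\<dots> = (\<Prod>x\<in>B. if fst x = w \<and> f (v, snd x) \<and> g x then 0 else 1)"
        by (intro prod.cong refl) auto
      finally show "?thesis f g" .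
    qed
    note eq = this
    have "measure_pmf.expectation (rig_edges m N p) (\<lambda>G. of_bool (\<forall>a<m. \<not> (G (v, a) \<and> G (w, a))) :: real)
      = measure_pmf.expectation ?PA (\<lambda>f. measure_pmf.expectation ?PB (\<lambda>g.
          of_bool (\<forall>a<m. \<not> (comb A (f, g) (v, a) \<and> comb A (f, g) (w, a)))))"
      unfolding A_def B_def by (rule rig_exp_split[OF assms(1)])
    also have "\<dots> = measure_pmf.expectation ?PA (\<lambda>f. measure_pmf.expectation ?PB (\<lambda>g.
        \<Prod>x\<in>B. if fst x = w \<and> f (v, snd x) \<and> g x then 0 else 1))"
      by (simp only: eq)
    finally show ?thesis .
  qed
  also have "\<dots> = measure_pmf.expectation ?PA (\<lambda>f. \<Prod>x\<in>B. if fst x = w \<and> f (v, snd x) then 1 - p else 1)"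
  proof (intro Bochner_Integration.integral_cong refl)
    fix f
    have "measure_pmf.expectation ?PB (\<lambda>g. \<Prod>x\<in>B. (\<lambda>x b. if fst x = w \<and> f (v, snd x) \<and> b then 0 else 1 :: real) x (g x))
      = (\<Prod>x\<in>B. (\<lambda>x b. if fst x = w \<and> f (v, snd x) \<and> b then 0 else 1 :: real) x True * p
          + (\<lambda>x b. if fst x = w \<and> f (v, snd x) \<and> b then 0 else 1 :: real) x False * (1 - p))"
      by (rule exp_Pi_prod_bern) (auto simp: finB assms)
    also have "\<dots> = (\<Prod>x\<in>B. if fst x = w \<and> f (v, snd x) then 1 - p else 1)"
      by (intro prod.cong refl) auto
    finally show "measure_pmf.expectation ?PB (\<lambda>g. \<Prod>x\<in>B. if fst x = w \<and> f (v, snd x) \<and> g x then 0 else 1)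
       = (\<Prod>x\<in>B. if fst x = w \<and> f (v, snd x) then 1 - p else 1)" by simp
  qed
  also have "\<dots> = measure_pmf.expectation ?PA (\<lambda>f. \<Prod>x\<in>A. (\<lambda>x b. if b then 1 - p else 1) x (f x))"
  proof (intro Bochner_Integration.integral_cong refl)
    fix f
    show "(\<Prod>x\<in>B. if fst x = w \<and> f (v, snd x) then 1 - p else 1) = (\<Prod>x\<in>A. (\<lambda>x b. if b then 1 - p else 1) x (f x))"
      unfolding B_def A_def
      by (subst prod_restrict_fst[OF _ _ wW]) (auto simp: prod_single_prod)
  qed
  also have "\<dots> = (\<Prod>x\<in>A. (1 - p) * p + 1 * (1 - p))"
    by (subst exp_Pi_prod_bern) (auto simp: finA assms)
  also have "\<dots> = (1 - p\<^sup>2) ^ m"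
    by (simp add: A_def card_cartesian_product algebra_simps power2_eq_square)
  finally show ?thesis .
qed

lemma mean_deg:
  assumes "v < N" "0 \<le> p" "p \<le> 1"
  shows "measure_pmf.expectation (rig_edges m N p) (\<lambda>G. real (rig_degree m N G v))
     = real (N - 1) * (1 - (1 - p\<^sup>2) ^ m)"
proof -
  have deg: "real (rig_degree m N G v) =
     (\<Sum>w\<in>{..<N}-{v}. 1 - of_bool (\<forall>a<m. \<not> (G (v, a) \<and> G (w, a))))" for G
  proof -
    have "(\<Sum>w\<in>{..<N}-{v}. 1 - (of_bool (\<forall>a<m. \<not> (G (v, a) \<and> G (w, a))) :: real)) =
          (\<Sum>w\<in>{..<N}-{v}. of_bool (\<exists>a<m. G (v, a) \<and> G (w, a)))"
      by (intro sum.cong refl) auto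
    also have "\<dots> = real (card (({..<N}-{v}) \<inter> {w. \<exists>a<m. G (v, a) \<and> G (w, a)}))"
      by simp
    also have "({..<N}-{v}) \<inter> {w. \<exists>a<m. G (v, a) \<and> G (w, a)} = {w\<in>{..<N}. rig_adj m G v w}"
      by (auto simp: rig_adj_def)
    finally show ?thesis by (simp add: rig_degree_def)
  qed
  have "measure_pmf.expectation (rig_edges m N p) (\<lambda>G. real (rig_degree m N G v)) =
     (\<Sum>w\<in>{..<N}-{v}. 1 - measure_pmf.expectation (rig_edges m N p) (\<lambda>G. of_bool (\<forall>a<m. \<not> (G (v, a) \<and> G (w, a)))))"
    unfolding deg
    by (subst Bochner_Integration.integral_sum)
       (auto simp: integrable_measure_pmf_finite fin_rig intro!: sum.cong simp del: of_bool_conj)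
  also have "\<dots> = (\<Sum>w\<in>{..<N}-{v}. 1 - (1 - p\<^sup>2) ^ m)"
    using assms by (intro sum.cong refl, subst mean_none) auto
  also have "\<dots> = real (N - 1) * (1 - (1 - p\<^sup>2) ^ m)" using assms by simp
  finally show ?thesis .
qed

lemma U_simpl:
  fixes p \<beta> \<gamma> t :: real
  assumes "0 \<le> p" "p \<le> 1" "real (N - 1) * p \<le> \<gamma>" "real m * p \<le> \<beta> * \<gamma>" "t \<ge> 0"
  shows "(1 - p + p * exp (real (N - 1) * p * (exp t - 1))) ^ m \<le> exp (\<beta> * \<gamma> * (exp (\<gamma> * (exp t - 1)) - 1))"
proof -
  define R where "R = exp (\<gamma> * (exp t - 1))"
  define E where "E = exp (real (N - 1) * p * (exp t - 1))"
  have et: "exp t - 1 \<ge> 0" using assms(5) by simp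
  have E1: "E \<ge> 1" unfolding E_def using et assms(1) by simp
  have ER: "E \<le> R" unfolding E_def R_def using mult_right_mono[OF assms(3) et] by simp
  have R1: "R \<ge> 1" using E1 ER by simp
  have b0: "0 \<le> 1 - p + p * E" using assms(1,2) E1 by (intro add_nonneg_nonneg mult_nonneg_nonneg) auto
  have "p * E \<le> p * R" using ER assms(1) by (rule mult_left_mono)
  hence "1 - p + p * E \<le> 1 + p * (R - 1)" by (simp add: algebra_simps)
  also have "\<dots> \<le> exp (p * (R - 1))" by (rule exp_ge_add_one_self)
  finally have "(1 - p + p * E) ^ m \<le> exp (p * (R - 1)) ^ m" using b0 by (intro power_mono) auto
  also have "\<dots> = exp (real m * p * (R - 1))" by (simp add: exp_of_nat_mult[symmetric] mult.assoc)
  also have "\<dots> \<le> exp (\<beta> * \<gamma> * (R - 1))" using mult_right_mono[OF assms(4), of "R - 1"] R1 by simp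
  finally show ?thesis by (simp add: E_def R_def)
qed

lemma L_lower:
  fixes \<beta> \<gamma> :: real
  assumes "N \<ge> 1" "n > 0" "\<gamma> / real n \<le> 1" "\<gamma> > 0" "real m \<le> \<beta> * real n"
  shows "(real N / real n - 1 / real n) * (real m / real n) * \<gamma>\<^sup>2 * (1 - \<beta> * \<gamma>\<^sup>2 / (2 * real n))
     \<le> real (N - 1) * (1 - (1 - (\<gamma> / real n)\<^sup>2) ^ m)"
proof -
  define q where "q = (\<gamma> / real n)\<^sup>2"
  define x where "x = real m * q"
  have q0: "q \<ge> 0" and q1: "q \<le> 1" unfolding q_def using assms(3,4)
    by (auto simp: power_le_one)
  have x0: "x \<ge> 0" unfolding x_def using q0 by simp
  have xle: "x \<le> \<beta> * \<gamma>\<^sup>2 / real n"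
  proof -
    have "x = real m * \<gamma>\<^sup>2 / (real n)\<^sup>2" by (simp add: x_def q_def power_divide)
    also have "\<dots> \<le> \<beta> * real n * \<gamma>\<^sup>2 / (real n)\<^sup>2"
      using assms(5) by (intro divide_right_mono mult_right_mono) auto
    also have "\<dots> = \<beta> * \<gamma>\<^sup>2 / real n" using assms(2) by (simp add: power2_eq_square)
    finally show ?thesis .
  qed
  have "(1 - q) ^ m \<le> exp (- q) ^ m"
    using q1 exp_ge_add_one_self[of "- q"] by (intro power_mono) auto
  also have "\<dots> = exp (- x)" by (simp add: x_def exp_of_nat_mult[symmetric])
  also have "\<dots> \<le> 1 - x + x\<^sup>2 / 2" by (rule exp_neg_quad[OF x0])
  finally have h1: "x * (1 - x / 2) \<le> 1 - (1 - q) ^ m" by (simp add: power2_eq_square algebra_simps)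
  have h2: "x * (1 - \<beta> * \<gamma>\<^sup>2 / (2 * real n)) \<le> x * (1 - x / 2)"
    using xle x0 by (intro mult_left_mono) auto
  have N1: "real (N - 1) = real N - 1" using assms(1) by simp
  have eq: "(real N / real n - 1 / real n) * (real m / real n) * \<gamma>\<^sup>2 = real (N - 1) * x"
    unfolding N1 x_def q_def using assms(2) by (simp add: field_simps power2_eq_square)
  have "(real N / real n - 1 / real n) * (real m / real n) * \<gamma>\<^sup>2 * (1 - \<beta> * \<gamma>\<^sup>2 / (2 * real n))
      = real (N - 1) * (x * (1 - \<beta> * \<gamma>\<^sup>2 / (2 * real n)))" by (subst eq) (simp only: mult.assoc)
  also have "\<dots> \<le> real (N - 1) * (1 - (1 - q) ^ m)"
    using h1 h2 by (intro mult_left_mono) auto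
  finally show ?thesis by (simp add: q_def)
qed

theorem lemma2:
  fixes \<beta> \<gamma> \<delta> :: real and n' n'' :: "nat \<Rightarrow> nat"
  assumes "\<beta> > 0" and "\<gamma> > 0" and "\<delta> > 0"
    and "eventually (\<lambda>n. n' n > 0 \<and> n'' n > 0 \<and>
            real (n' n) \<le> of_int \<lfloor>\<beta> * real n\<rfloor> \<and> n'' n \<le> n) at_top"
    and "((\<lambda>n. real (n' n) / real n) \<longlongrightarrow> \<beta>) at_top"
    and "((\<lambda>n. real (n'' n) / real n) \<longlongrightarrow> 1) at_top"
  shows "\<exists>C>0. \<exists>N0::nat. \<forall>n\<ge>N0. \<forall>k::nat\<ge>1.
           measure_pmf.prob (iid_sum_pmf k (D_pmf (n' n) (n'' n) (\<gamma> / real n)))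
              {x. real x \<ge> (1 + \<delta>) * (\<beta> * \<gamma>\<^sup>2) * real k} \<le> exp (- C * real k)
         \<and> measure_pmf.prob (iid_sum_pmf k (D_pmf (n' n) (n'' n) (\<gamma> / real n)))
              {x. real x \<le> (1 - \<delta>) * (\<beta> * \<gamma>\<^sup>2) * real k} \<le> exp (- C * real k)"
proof -
  define \<mu> where "\<mu> = \<beta> * \<gamma>\<^sup>2"
  have \<mu>0: "\<mu> > 0" unfolding \<mu>_def using assms by simp
  define \<Phi> where "\<Phi> = (\<lambda>t. \<beta> * \<gamma> * (exp (\<gamma> * (exp t - 1)) - 1))"
  define \<psi> where "\<psi> = (\<lambda>t. \<Phi> t - t * ((1 + \<delta>) * \<mu>))"
  have der: "DERIV \<psi> 0 :> - (\<delta> * \<mu>)"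
  proof -
    have "DERIV \<psi> 0 :> \<beta> * \<gamma> * (exp (\<gamma> * (exp 0 - 1)) * (\<gamma> * exp 0)) - (1 + \<delta>) * \<mu>"
      unfolding \<psi>_def \<Phi>_def by (auto intro!: derivative_eq_intros)
    thus ?thesis by (simp add: \<mu>_def power2_eq_square algebra_simps)
  qed
  obtain d where d0: "d > 0" and dh: "\<And>h. h > 0 \<Longrightarrow> h < d \<Longrightarrow> \<psi> 0 > \<psi> (0 + h)"
    using DERIV_neg_dec_right[OF der] \<mu>0 assms(3) by auto
  define t1 where "t1 = d / 2"
  have t1: "t1 > 0" using d0 by (simp add: t1_def)
  have \<psi>0: "\<psi> 0 = 0" by (simp add: \<psi>_def \<Phi>_def)
  have \<psi>t1: "\<psi> t1 < 0" using dh[of t1] t1 d0 \<psi>0 by (simp add: t1_def)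
  define C1 where "C1 = - \<psi> t1"
  define K where "K = 2 * exp (\<Phi> 1)"
  have K0: "K > 0" by (simp add: K_def)
  define t2 where "t2 = \<delta> * \<mu> / (2 * K)"
  have t2: "t2 > 0" using K0 \<mu>0 assms(3) by (simp add: t2_def)
  define C2 where "C2 = (\<delta> * \<mu>)\<^sup>2 / (8 * K)"
  define C where "C = min C1 C2"
  have C0: "C > 0" using \<psi>t1 K0 \<mu>0 assms(3) by (simp add: C_def C1_def C2_def)
  define s where "s = (\<lambda>n. (real (n'' n) / real n - 1 / real n) * (real (n' n) / real n) * \<gamma>\<^sup>2
        * (1 - (\<beta> * \<gamma>\<^sup>2 / 2) / real n))"
  have "(s \<longlongrightarrow> (1 - 0) * \<beta> * \<gamma>\<^sup>2 * (1 - 0)) at_top"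
    unfolding s_def by (intro tendsto_intros assms(5,6))
  hence "(s \<longlongrightarrow> \<mu>) at_top" by (simp add: \<mu>_def)
  hence ev3: "eventually (\<lambda>n. (1 - \<delta> / 2) * \<mu> < s n) at_top"
    by (rule order_tendstoD(1)) (use \<mu>0 assms(3) in simp)
  have ev2: "eventually (\<lambda>n::nat. n \<ge> nat \<lceil>\<gamma>\<rceil> + 1) at_top" by (rule eventually_ge_at_top)
  obtain N0 where N0: "\<And>n. n \<ge> N0 \<Longrightarrow> (n' n > 0 \<and> n'' n > 0 \<and>
            real (n' n) \<le> of_int \<lfloor>\<beta> * real n\<rfloor> \<and> n'' n \<le> n) \<and> (1 - \<delta> / 2) * \<mu> < s n
            \<and> n \<ge> nat \<lceil>\<gamma>\<rceil> + 1"
    using eventually_conj[OF assms(4) eventually_conj[OF ev3 ev2]]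
    unfolding eventually_at_top_linorder by blast
  show ?thesis
  proof (intro exI[of _ C] conjI C0 exI[of _ N0] allI impI)
    fix n k :: nat
    assume nN0: "n \<ge> N0" and k1: "k \<ge> 1"
    define m where "m = n' n"
    define N where "N = n'' n"
    define p where "p = \<gamma> / real n"
    have N1: "N \<ge> 1" and Nn: "N \<le> n" and mle: "real m \<le> \<beta> * real n"
      and sn: "(1 - \<delta> / 2) * \<mu> < s n" and nbig: "n \<ge> nat \<lceil>\<gamma>\<rceil> + 1"
      using N0[OF nN0] unfolding m_def N_def by (auto intro: order.trans[OF _ of_int_floor_le])
    have n0: "n > 0" using nbig by simp
    have gn: "\<gamma> \<le> real n" using nbig by linarith
    have p0: "0 \<le> p" and p1: "p \<le> 1" using gn n0 assms(2) by (auto simp: p_def)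
    have Np: "real (N - 1) * p \<le> \<gamma>"
    proof -
      have "real (N - 1) * p \<le> real n * p" using Nn p0 by (intro mult_right_mono) auto
      thus ?thesis using n0 by (simp add: p_def)
    qed
    have mp: "real m * p \<le> \<beta> * \<gamma>"
    proof -
      have "real m * p \<le> \<beta> * real n * p" using mle p0 by (intro mult_right_mono) auto
      thus ?thesis using n0 by (simp add: p_def)
    qed
    have Ubound: "measure_pmf.expectation (rig_edges m N p) (\<lambda>G. exp (t * real (rig_degree m N G v))) \<le> exp (\<Phi> t)"
      if "v < N" "t \<ge> 0" for v t
      using order.trans[OF U_bound[OF that(1) p0 p1 that(2)] U_simpl[OF p0 p1 Np mp that(2)]]
      by (simp add: \<Phi>_def)
    have "measure_pmf.expectation (D_pmf m N p) (\<lambda>x. exp (t1 * real x)) \<le> exp (\<Phi> t1)"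
      using N1 Ubound t1 by (intro D_bound) auto
    hence "measure_pmf.expectation (D_pmf m N p) (\<lambda>x. exp (t1 * real x)) * exp (- t1 * ((1 + \<delta>) * \<mu>))
        \<le> exp (\<Phi> t1) * exp (- t1 * ((1 + \<delta>) * \<mu>))" by (intro mult_right_mono) auto
    also have "\<dots> = exp (- C1)" by (simp add: C1_def \<psi>_def exp_add[symmetric])
    also have "\<dots> \<le> exp (- C)" by (simp add: C_def)
    finally have up: "measure_pmf.prob (iid_sum_pmf k (D_pmf m N p)) {x. real x \<ge> ((1 + \<delta>) * \<mu>) * real k}
        \<le> exp (- C * real k)"
      by (intro chernoff_upper[OF fin_D]) (use t1 in auto)
    have Lv: "measure_pmf.expectation (rig_edges m N p) (\<lambda>G. exp (- t2 * real (rig_degree m N G v)))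
       \<le> exp (- t2 * ((1 - \<delta> / 2) * \<mu>) + t2\<^sup>2 / 2 * K)" if v: "v < N" for v
    proof -
      let ?d = "\<lambda>G. real (rig_degree m N G v)"
      let ?E = "measure_pmf.expectation (rig_edges m N p)"
      have int: "integrable (rig_edges m N p) f" for f :: "_ \<Rightarrow> real"
        by (simp add: integrable_measure_pmf_finite fin_rig)
      have "?E (\<lambda>G. exp (- t2 * ?d G)) \<le> ?E (\<lambda>G. 1 - t2 * ?d G + t2\<^sup>2 / 2 * (?d G)\<^sup>2)"
      proof (intro integral_mono int)
        fix G
        show "exp (- t2 * ?d G) \<le> 1 - t2 * ?d G + t2\<^sup>2 / 2 * (?d G)\<^sup>2"
          using exp_neg_quad[of "t2 * ?d G"] t2 by (simp add: power_mult_distrib)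
      qed
      also have "\<dots> = 1 - t2 * ?E ?d + t2\<^sup>2 / 2 * ?E (\<lambda>G. (?d G)\<^sup>2)"
        by (simp add: int)
      also have "?E ?d = real (N - 1) * (1 - (1 - p\<^sup>2) ^ m)"
        by (rule mean_deg[OF v p0 p1])
      also have "?E (\<lambda>G. (?d G)\<^sup>2) \<le> K"
      proof -
        have "?E (\<lambda>G. (?d G)\<^sup>2) \<le> ?E (\<lambda>G. 2 * exp (1 * ?d G))"
          by (intro integral_mono int) (simp add: sq_le_exp)
        also have "\<dots> = 2 * ?E (\<lambda>G. exp (1 * ?d G))" by simp
        also have "\<dots> \<le> 2 * exp (\<Phi> 1)" using Ubound[OF v, of 1] by simp
        finally show ?thesis by (simp add: K_def)
      qed
      hence "1 - t2 * (real (N - 1) * (1 - (1 - p\<^sup>2) ^ m)) + t2\<^sup>2 / 2 * ?E (\<lambda>G. (?d G)\<^sup>2)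
          \<le> 1 - t2 * (real (N - 1) * (1 - (1 - p\<^sup>2) ^ m)) + t2\<^sup>2 / 2 * K"
        by (intro add_left_mono mult_left_mono) auto
      also have "(1 - \<delta> / 2) * \<mu> \<le> real (N - 1) * (1 - (1 - p\<^sup>2) ^ m)"
        using sn L_lower[OF N1 n0 _ assms(2) mle] p1 unfolding s_def m_def N_def p_def
        by (simp add: m_def N_def p_def)
      hence "1 - t2 * (real (N - 1) * (1 - (1 - p\<^sup>2) ^ m)) + t2\<^sup>2 / 2 * K
          \<le> 1 + (- t2 * ((1 - \<delta> / 2) * \<mu>) + t2\<^sup>2 / 2 * K)"
        using t2 by (simp add: mult_left_mono)
      also have "\<dots> \<le> exp (- t2 * ((1 - \<delta> / 2) * \<mu>) + t2\<^sup>2 / 2 * K)"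
        by (rule exp_ge_add_one_self)
      finally show ?thesis .
    qed
    have "measure_pmf.expectation (D_pmf m N p) (\<lambda>x. exp (- t2 * real x))
        \<le> exp (- t2 * ((1 - \<delta> / 2) * \<mu>) + t2\<^sup>2 / 2 * K)"
      using N1 Lv by (intro D_bound) auto
    hence "measure_pmf.expectation (D_pmf m N p) (\<lambda>x. exp (- t2 * real x)) * exp (t2 * ((1 - \<delta>) * \<mu>))
        \<le> exp (- t2 * ((1 - \<delta> / 2) * \<mu>) + t2\<^sup>2 / 2 * K) * exp (t2 * ((1 - \<delta>) * \<mu>))"
      by (intro mult_right_mono) auto
    also have "\<dots> = exp (- C2)"
    proof -
      have "- t2 * ((1 - \<delta> / 2) * \<mu>) + t2\<^sup>2 / 2 * K + t2 * ((1 - \<delta>) * \<mu>) = - C2"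
        unfolding t2_def C2_def using K0 by (simp add: field_simps power2_eq_square)
      thus ?thesis by (simp add: exp_add[symmetric])
    qed
    also have "\<dots> \<le> exp (- C)" by (simp add: C_def)
    finally have low: "measure_pmf.prob (iid_sum_pmf k (D_pmf m N p)) {x. real x \<le> ((1 - \<delta>) * \<mu>) * real k}
        \<le> exp (- C * real k)"
      by (intro chernoff_lower[OF fin_D]) (use t2 in auto)
    show "measure_pmf.prob (iid_sum_pmf k (D_pmf (n' n) (n'' n) (\<gamma> / real n)))
              {x. real x \<ge> (1 + \<delta>) * (\<beta> * \<gamma>\<^sup>2) * real k} \<le> exp (- C * real k)"
      using up by (simp add: m_def N_def p_def \<mu>_def)
    show "measure_pmf.prob (iid_sum_pmf k (D_pmf (n' n) (n'' n) (\<gamma> / real n)))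
              {x. real x \<le> (1 - \<delta>) * (\<beta> * \<gamma>\<^sup>2) * real k} \<le> exp (- C * real k)"
      using low by (simp add: m_def N_def p_def \<mu>_def)
  qed
qed

end
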